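(* Let $\kappa\in\mathbb Z[q,q^{-1}]$ satisfy $\overline{\kappa}=\kappa$, write $\kappa=\sum_{i\in\mathbb Z}c_iq^i$, and set $\diamondsuit=\sum_{i\in\mathbb Z}(-1)^ic_{2i}$. Let $t=F+\check E+\kappa K^{-1}$, $B_{\rm ev}=\frac{t^2-\diamondsuit^2}{[2]}$ and $B_{\rm odd}=\frac{t^2-1+\diamondsuit^2}{[2]}$. Then in $\mathbf U$ $$B_{\rm ev}=\check E^{(2)}+q^{-1}\check EF+F^{(2)}+q^{-1}\kappa K^{-1}F+q^{-1}\kappa\check EK^{-1}+\bigl(q+(q^3-q)\kappa^2\bigr)\frac{K^{-2}-1}{q^4-1}+\frac{\kappa^2-\diamondsuit^2}{[2]},$$ $$B_{\rm odd}=\check E^{(2)}+q^{-1}\check EF+F^{(2)}+q^{-1}\kappa K^{-1}F+q^{-1}\kappa\check EK^{-1}+\bigl(q+(q^3-q)\kappa^2\bigr)\frac{K^{-2}-q^2}{q^4-1}+\frac{q^2(\kappa^2-\diamondsuit^2)}{[2]}+q\diamondsuit^2.$$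
   Context: $q$ is an indeterminate, bar is the ring involution of $\mathbb Z[q,q^{-1}]$ with $q\mapsto q^{-1}$, $[n]=\frac{q^n-q^{-n}}{q-q^{-1}}$, $[2]!=[2]$. $\mathbf U$ is the $\mathbb Q(q)$-algebra generated by $E,F,K^{\pm1}$ with relations $KK^{-1}=K^{-1}K=1$, $EF-FE=\frac{K-K^{-1}}{q-q^{-1}}$, $KE=q^2EK$, $KF=q^{-2}FK$; $\check E=q^{-1}EK^{-1}$, $\check E^{(2)}=\check E^2/[2]$, $F^{(2)}=F^2/[2]$. *)

theory Defs
  imports "HOL-Computational_Algebra.Polynomial" "HOL-Computational_Algebra.Fraction_Field"
begin

type_synonym Qq = "rat poly fract"

definition qv :: Qq where "qv = Fract [:0, 1:] 1"

definition qint :: "int \<Rightarrow> Qq" where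
  "qint n = (qv powi n - qv powi (-n)) / (qv - inverse qv)"

text \<open>Laurent polynomial in Z[q,q^-1] with finitely supported coefficients c, viewed in Q(q).\<close>
definition laurent :: "(int \<Rightarrow> int) \<Rightarrow> Qq" where
  "laurent c = (\<Sum>i\<in>{i. c i \<noteq> 0}. of_int (c i) * qv powi i)"

definition lbar :: "(int \<Rightarrow> int) \<Rightarrow> (int \<Rightarrow> int)" where
  "lbar c = (\<lambda>i. c (- i))"

text \<open>phi : Q(q) -> A is a central unital ring homomorphism (A a Q(q)-algebra) and
  E, F, K, Ki satisfy the defining relations of U.\<close>
definition U_alg :: "(Qq \<Rightarrow> 'a::ring_1) \<Rightarrow> 'a \<Rightarrow> 'a \<Rightarrow> 'a \<Rightarrow> 'a \<Rightarrow> bool" where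
  "U_alg \<phi> E F K Ki \<longleftrightarrow>
     (\<forall>a b. \<phi> (a + b) = \<phi> a + \<phi> b) \<and> (\<forall>a b. \<phi> (a * b) = \<phi> a * \<phi> b) \<and> \<phi> 1 = 1 \<and>
     (\<forall>a x. \<phi> a * x = x * \<phi> a) \<and>
     K * Ki = 1 \<and> Ki * K = 1 \<and>
     E * F - F * E = \<phi> (inverse (qv - inverse qv)) * (K - Ki) \<and>
     K * E = \<phi> (qv ^ 2) * E * K \<and>
     K * F = \<phi> (inverse (qv ^ 2)) * F * K"

end

theory Submission
  imports Defs
begin

lemma qv_pow: "qv ^ n = Fract ([:0,1:] ^ n) 1"
  by (induction n) (auto simp: qv_def One_fract_def mult.commute)
lemma qv_nz: "qv \<noteq> 0"
  by (simp add: qv_def Zero_fract_def eq_fract)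
lemma qv2: "qv ^ 2 \<noteq> 1"
proof
  assume "qv ^ 2 = 1" then have "[:0,1:] ^ 2 = (1::rat poly)" by (simp add: qv_pow One_fract_def eq_fract)
  then have "coeff ([:0,1:] ^ 2) 2 = coeff (1::rat poly) 2" by simp
  then show False by (simp add: monom_altdef[of 1, simplified, symmetric])
qed
lemma qv2m: "qv ^ 2 \<noteq> -1"
proof
  assume "qv ^ 2 = -1" then have "[:0,1:] ^ 2 = (-1::rat poly)" by (simp add: qv_pow One_fract_def eq_fract)
  then have "coeff ([:0,1:] ^ 2) 2 = coeff (-1::rat poly) 2" by simp
  then show False by (simp add: monom_altdef[of 1, simplified, symmetric])
qed
lemma qint2: "qint 2 = qv + inverse qv"
  using qv_nz qv2 unfolding qint_def by (simp add: power_int_minus field_simps power2_eq_square)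

lemma fid:
  fixes x k d :: "'b::field"
  assumes x: "x \<noteq> 0" and a: "x^2 - 1 \<noteq> 0" and b: "x^2 + 1 \<noteq> 0"
  defines "h \<equiv> x / (x^2+1)" and "iq \<equiv> 1 / x" and "iq2 \<equiv> 1 / x^2" and "c0 \<equiv> x / (x^2 - 1)"
    and "C \<equiv> (x + (x ^ 3 - x) * k ^ 2) / ((x^2 - 1) * (x^2 + 1))"
  shows "h*(iq*iq2 + iq) = iq*iq" "h*(k*iq2 + k) = iq*k" "h*(iq*k + k*iq*iq2) = iq*k*iq"
    "h*(iq*c0 + k*k) = C" "h*(-(iq*c0) + - d) = (k^2 - d) * h - C"
    "h*(-(iq*c0) + - 1 + d) = C * (-(x^2)) + x^2 * (k^2 - d) * h + x * d"
proof -
  have b': "1 + x^2 \<noteq> 0" using b by (simp add: add.commute)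
  have nz1: "x * x + x * (x * (x * x)) \<noteq> 0"
  proof -
    have "x * x + x * (x * (x * x)) = x * x * (1 + x^2)" by (simp add: algebra_simps power2_eq_square)
    then show ?thesis using x b' by simp
  qed
  have nz2: "x * (x * x) + x * (x * (x * (x * x))) \<noteq> 0"
  proof -
    have "x * (x * x) + x * (x * (x * (x * x))) = x * x * x * (1 + x^2)" by (simp add: algebra_simps power2_eq_square)
    then show ?thesis using x b' by simp
  qed
  have e: "x^2 + 1 = x * (x + iq)" using x unfolding iq_def by (simp add: field_simps power2_eq_square)
  show "h*(iq*iq2 + iq) = iq*iq" "h*(k*iq2 + k) = iq*k" "h*(iq*k + k*iq*iq2) = iq*k*iq"
    using x b b' nz1 nz2 unfolding h_def iq_def iq2_def by (simp_all add: field_simps power2_eq_square; algebra)+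
  have f: "(x^2 - 1) * (x^2 + 1) \<noteq> 0" using a b by simp
  show "h*(iq*c0 + k*k) = C"
    using x a b b' f unfolding h_def iq_def c0_def C_def by (simp add: field_simps power2_eq_square power3_eq_cube)
  have w: "(x^2-1)*(iq*c0) = 1" using x a unfolding iq_def c0_def by (simp add: field_simps)
  have xd: "x*d = h*(x^2+1)*d" using b unfolding h_def by (simp add: field_simps)
  have C4: "C = h*(iq*c0 + k*k)"
    using x a b b' f unfolding h_def iq_def c0_def C_def by (simp add: field_simps power2_eq_square power3_eq_cube)
  show "h*(-(iq*c0) + - d) = (k^2 - d) * h - C"
    unfolding C4 by algebra
  show "h*(-(iq*c0) + - 1 + d) = C * (-(x^2)) + x^2 * (k^2 - d) * h + x * d"
    unfolding xd C4 using w by algebra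
qed

lemma main_alg:
  fixes s :: "Qq \<Rightarrow> 'a::ring_1" and E F K Ki :: 'a and k d2 :: Qq
  assumes U: "U_alg s E F K Ki"
  defines "t \<equiv> F + s (inverse qv) * E * Ki + s k * Ki"
  shows "s (inverse (qint 2)) * (t ^ 2 - s d2) =
           s (inverse (qint 2)) * (s (inverse qv) * E * Ki) ^ 2 + s (inverse qv) * (s (inverse qv) * E * Ki) * F + s (inverse (qint 2)) * F ^ 2
           + s (inverse qv * k) * Ki * F + s (inverse qv * k) * (s (inverse qv) * E * Ki) * Ki
           + s ((qv + (qv ^ 3 - qv) * k ^ 2) / (qv ^ 4 - 1)) * (Ki ^ 2 - 1)
           + s ((k ^ 2 - d2) / qint 2)"
    and "s (inverse (qint 2)) * (t ^ 2 - 1 + s d2) =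
           s (inverse (qint 2)) * (s (inverse qv) * E * Ki) ^ 2 + s (inverse qv) * (s (inverse qv) * E * Ki) * F + s (inverse (qint 2)) * F ^ 2
           + s (inverse qv * k) * Ki * F + s (inverse qv * k) * (s (inverse qv) * E * Ki) * Ki
           + s ((qv + (qv ^ 3 - qv) * k ^ 2) / (qv ^ 4 - 1)) * (Ki ^ 2 - s (qv ^ 2))
           + s (qv ^ 2 * (k ^ 2 - d2) / qint 2)
           + s (qv * d2)"
proof -
  have sadd: "\<And>a b. s (a + b) = s a + s b" and smul: "\<And>a b. s (a * b) = s a * s b"
    and s1: "s 1 = 1" and scomm: "\<And>a x. s a * x = x * s a"
    and KKi: "K * Ki = 1" and KiK: "Ki * K = 1"
    and EF: "E * F - F * E = s (inverse (qv - inverse qv)) * (K - Ki)"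
    and KE: "K * E = s (qv ^ 2) * E * K" and KF: "K * F = s (inverse (qv ^ 2)) * F * K"
    using U unfolding U_alg_def by blast+
  have s0: "s 0 = 0" using sadd[of 0 0] by simp
  have sneg: "\<And>a. s (- a) = - s a" by (metis sadd s0 neg_eq_iff_add_eq_0 right_minus)
  have sdiff: "\<And>a b. s (a - b) = s a - s b" using sadd[of a "-b" for a b] sneg by simp
  have smm: "\<And>a b. s a * s b = s (a * b)" by (simp add: smul)
  have smm': "\<And>a b y. s a * (s b * y) = s (a * b) * y" by (simp add: smul mult.assoc)
  define X where "X = E * Ki"
  have cX: "\<And>a. X * s a = s a * X" by (simp add: scomm)
  have cXp: "\<And>a y. X * (s a * y) = s a * (X * y)" by (metis mult.assoc scomm)
  have cF: "\<And>a. F * s a = s a * F" by (simp add: scomm)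
  have cF': "\<And>a y. F * (s a * y) = s a * (F * y)" by (metis mult.assoc scomm)
  have cK: "\<And>a. Ki * s a = s a * Ki" by (simp add: scomm)
  have cK': "\<And>a y. Ki * (s a * y) = s a * (Ki * y)" by (metis mult.assoc scomm)
  have cE': "\<And>a y. E * (s a * y) = s a * (E * y)" by (metis mult.assoc scomm)
  have nz: "qv \<noteq> 0" "qv ^ 2 \<noteq> 1" "qv ^ 2 \<noteq> -1" using qv_nz qv2 qv2m by auto
  have siq: "s (inverse (qv^2)) * s (qv^2) = 1" using nz by (simp add: smm s1)
  have R1: "F * Ki = s (inverse (qv^2)) * (Ki * F)"
  proof -
    have "Ki * (K * F) * Ki = F * Ki" by (metis KiK mult.assoc mult_1_left)
    also have "Ki * (K * F) * Ki = s (inverse (qv ^ 2)) * (Ki * F)"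
      by (simp add: KF mult.assoc KKi cK')
    finally show ?thesis by simp
  qed
  have KiF: "Ki * F = s (qv^2) * (F * Ki)"
    by (simp add: R1 smm' nz s1)
  have KiE: "Ki * E = s (inverse (qv^2)) * (E * Ki)"
  proof -
    have "Ki * (K * E) * Ki = E * Ki" by (metis KiK mult.assoc mult_1_left)
    also have "Ki * (K * E) * Ki = s (qv ^ 2) * (Ki * E)"
      by (simp add: KE mult.assoc KKi cK')
    finally have "E * Ki = s (qv^2) * (Ki * E)" by simp
    then show ?thesis by (simp add: smm' nz s1)
  qed
  have R2: "Ki * X = s (inverse (qv^2)) * (X * Ki)"
    unfolding X_def by (simp add: mult.assoc[symmetric] KiE)
  have XF: "X * F = s (qv^2) * (E * (F * Ki))"
    unfolding X_def by (simp add: mult.assoc KiF cE')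
  have R3: "F * X = s (inverse (qv^2)) * (X * F) - s (inverse (qv - inverse qv)) + s (inverse (qv - inverse qv)) * (Ki * Ki)"
  proof -
    have "F * E = E * F - s (inverse (qv - inverse qv)) * (K - Ki)" using EF by (simp add: algebra_simps)
    then have "F * X = E * F * Ki - s (inverse (qv - inverse qv)) * (K - Ki) * Ki"
      unfolding X_def by (metis mult.assoc left_diff_distrib)
    also have "\<dots> = E * (F * Ki) - s (inverse (qv - inverse qv)) + s (inverse (qv - inverse qv)) * (Ki * Ki)"
      by (simp add: mult.assoc left_diff_distrib right_diff_distrib KKi)
    also have "E * (F * Ki) = s (inverse (qv^2)) * (X * F)"
      by (simp add: XF smm' nz s1)
    finally show ?thesis .
  qed
  define iq where "iq = inverse qv"
  define iq2 where "iq2 = inverse (qv^2)"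
  define c0 where "c0 = inverse (qv - inverse qv)"
  define h where "h = inverse (qint 2)"
  define C where "C = (qv + (qv ^ 3 - qv) * k ^ 2) / (qv ^ 4 - 1)"
  define L where "L = (\<lambda>a1 a2 a3 a4 a5 a6 a7. s a1 * (X * X) + s a2 * (X * F) + s a3 * (F * F)
     + s a4 * (Ki * F) + s a5 * (X * Ki) + s a6 * (Ki * Ki) + s a7)"
  have nzs: "qv \<noteq> 0" "qv^2 - 1 \<noteq> 0" "qv^2 + 1 \<noteq> 0" using nz by (auto simp: add_eq_0_iff)
  have nzx: "qv^4 - 1 \<noteq> 0" "qv^2 + qv^4 \<noteq> 0" "qv * qv^2 + qv * qv^4 \<noteq> 0" "qv^4 \<noteq> 1"
  proof -
    have e1: "qv^4 - 1 = (qv^2 - 1) * (qv^2 + 1)" by (simp add: algebra_simps power2_eq_square power4_eq_xxxx)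
    have e2: "qv^2 + qv^4 = qv^2 * (qv^2 + 1)" by (simp add: algebra_simps power2_eq_square power4_eq_xxxx)
    have e3: "qv * qv^2 + qv * qv^4 = qv^3 * (qv^2 + 1)" by (simp add: algebra_simps power2_eq_square power3_eq_cube power4_eq_xxxx)
    show "qv^4 - 1 \<noteq> 0" "qv^2 + qv^4 \<noteq> 0" "qv * qv^2 + qv * qv^4 \<noteq> 0" using nzs unfolding e1 e2 e3 by simp_all
    then show "qv^4 \<noteq> 1" by simp
  qed
  have nzy: "1 + qv * qv \<noteq> 0" using nzs(3) by (simp add: power2_eq_square add.commute)
  have hE: "h = qv / (qv^2 + 1)" unfolding h_def qint2 using nzs by (simp add: field_simps power2_eq_square)
  have iqE: "iq = 1 / qv" unfolding iq_def by (simp add: field_simps)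
  have iq2E: "iq2 = 1 / qv^2" unfolding iq2_def by (simp add: field_simps)
  have c0E: "c0 = qv / (qv^2 - 1)" unfolding c0_def using nzs by (simp add: field_simps power2_eq_square)
  have CE: "C = (qv + (qv ^ 3 - qv) * k ^ 2) / ((qv^2 - 1) * (qv^2 + 1))" unfolding C_def
    by (simp add: algebra_simps power2_eq_square power3_eq_cube power4_eq_xxxx)
  have Ladd: "\<And>a1 a2 a3 a4 a5 a6 a7 b1 b2 b3 b4 b5 b6 b7. L a1 a2 a3 a4 a5 a6 a7 + L b1 b2 b3 b4 b5 b6 b7
     = L (a1+b1) (a2+b2) (a3+b3) (a4+b4) (a5+b5) (a6+b6) (a7+b7)"
    by (simp add: L_def sadd algebra_simps)
  have Lsc: "\<And>c a1 a2 a3 a4 a5 a6 a7. s c * L a1 a2 a3 a4 a5 a6 a7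
     = L (c*a1) (c*a2) (c*a3) (c*a4) (c*a5) (c*a6) (c*a7)"
    by (simp add: L_def distrib_left smm' smm)
  have Lc: "\<And>d a1 a2 a3 a4 a5 a6 a7. L a1 a2 a3 a4 a5 a6 a7 + s d
     = L a1 a2 a3 a4 a5 a6 (a7 + d)"
    by (simp add: L_def sadd algebra_simps)
  have Leq: "\<And>a1 a2 a3 a4 a5 a6 a7 b1 b2 b3 b4 b5 b6 b7. a1 = b1 \<Longrightarrow> a2 = b2 \<Longrightarrow> a3 = b3 \<Longrightarrow> a4 = b4
     \<Longrightarrow> a5 = b5 \<Longrightarrow> a6 = b6 \<Longrightarrow> a7 = b7 \<Longrightarrow> L a1 a2 a3 a4 a5 a6 a7 = L b1 b2 b3 b4 b5 b6 b7"
    by simp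
  have EX: "s (inverse qv) * E * Ki = s iq * X" by (simp add: X_def iq_def mult.assoc)
  have t': "t = F + s iq * X + s k * Ki" unfolding t_def EX ..
  have T1: "F * t = L 0 (iq*iq2) 1 (k*iq2) 0 (iq*c0) (-(iq*c0))"
    unfolding t' L_def by (simp add: R1 R3 smm smm' cF' sdiff sneg s0 s1 sadd algebra_simps iq_def iq2_def c0_def)
  have T2: "(s iq * X) * t = L (iq*iq) iq 0 0 (iq*k) 0 0"
    unfolding t' L_def by (simp add: smm smm' cXp cX sdiff sneg s0 s1 sadd algebra_simps)
  have T3: "(s k * Ki) * t = L 0 0 0 k (k*iq*iq2) (k*k) 0"
    unfolding t' L_def by (simp add: R2 smm smm' cK' cK sdiff sneg s0 s1 sadd algebra_simps iq_def iq2_def)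
  have TT: "t ^ 2 = L (iq*iq) (iq*iq2 + iq) 1 (k*iq2 + k) (iq*k + k*iq*iq2) (iq*c0 + k*k) (-(iq*c0))"
  proof -
    have "t ^ 2 = F * t + (s iq * X) * t + (s k * Ki) * t"
      unfolding power2_eq_square t' by (simp only: distrib_right)
    then show ?thesis by (simp add: T1 T2 T3 Ladd)
  qed
  have FID: "h*(iq*iq2 + iq) = iq*iq" "h*(k*iq2 + k) = iq*k" "h*(iq*k + k*iq*iq2) = iq*k*iq"
    "h*(iq*c0 + k*k) = C" "h*(-(iq*c0) + - d2) = (k^2 - d2) * h - C"
    "h*(-(iq*c0) + - 1 + d2) = C * (-(qv^2)) + qv^2 * (k^2 - d2) * h + qv * d2"
    unfolding hE iqE iq2E c0E CE by (rule fid[OF nzs])+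
  have RH1: "s (inverse (qint 2)) * (s (inverse qv) * E * Ki) ^ 2 + s (inverse qv) * (s (inverse qv) * E * Ki) * F + s (inverse (qint 2)) * F ^ 2
           + s (inverse qv * k) * Ki * F + s (inverse qv * k) * (s (inverse qv) * E * Ki) * Ki
           + s ((qv + (qv ^ 3 - qv) * k ^ 2) / (qv ^ 4 - 1)) * (Ki ^ 2 - 1)
           + s ((k ^ 2 - d2) / qint 2) = L (h*(iq*iq)) (iq*iq) h (iq*k) (iq*k*iq) C ((k^2 - d2) * h - C)"
    unfolding EX L_def h_def C_def
    by (simp add: smm smm' cXp cX sdiff sneg s0 s1 sadd algebra_simps power2_eq_square iq_def divide_inverse)
  have RH2: "s (inverse (qint 2)) * (s (inverse qv) * E * Ki) ^ 2 + s (inverse qv) * (s (inverse qv) * E * Ki) * F + s (inverse (qint 2)) * F ^ 2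
           + s (inverse qv * k) * Ki * F + s (inverse qv * k) * (s (inverse qv) * E * Ki) * Ki
           + s ((qv + (qv ^ 3 - qv) * k ^ 2) / (qv ^ 4 - 1)) * (Ki ^ 2 - s (qv ^ 2))
           + s (qv ^ 2 * (k ^ 2 - d2) / qint 2)
           + s (qv * d2) = L (h*(iq*iq)) (iq*iq) h (iq*k) (iq*k*iq) C (C * (-(qv^2)) + qv^2 * (k^2 - d2) * h + qv * d2)"
    unfolding EX L_def h_def C_def
    by (simp add: smm smm' cXp cX sdiff sneg s0 s1 sadd algebra_simps power2_eq_square iq_def divide_inverse)
  have "s (inverse (qint 2)) * (t ^ 2 - s d2) = L (h*(iq*iq)) (h*(iq*iq2 + iq)) (h*1) (h*(k*iq2 + k)) (h*(iq*k + k*iq*iq2)) (h*(iq*c0 + k*k)) (h*(-(iq*c0) + - d2))"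
  proof -
    have "t ^ 2 - s d2 = t ^ 2 + s (- d2)" by (simp add: sneg)
    then show ?thesis by (simp only: TT Lc Lsc h_def)
  qed
  also have "\<dots> = L (h*(iq*iq)) (iq*iq) h (iq*k) (iq*k*iq) C ((k^2 - d2) * h - C)"
    by (rule Leq) (simp_all only: FID mult_1_right)
  finally show "s (inverse (qint 2)) * (t ^ 2 - s d2) = s (inverse (qint 2)) * (s (inverse qv) * E * Ki) ^ 2 + s (inverse qv) * (s (inverse qv) * E * Ki) * F + s (inverse (qint 2)) * F ^ 2
           + s (inverse qv * k) * Ki * F + s (inverse qv * k) * (s (inverse qv) * E * Ki) * Ki
           + s ((qv + (qv ^ 3 - qv) * k ^ 2) / (qv ^ 4 - 1)) * (Ki ^ 2 - 1)
           + s ((k ^ 2 - d2) / qint 2)" unfolding RH1 .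
  have "s (inverse (qint 2)) * (t ^ 2 - 1 + s d2) = L (h*(iq*iq)) (h*(iq*iq2 + iq)) (h*1) (h*(k*iq2 + k)) (h*(iq*k + k*iq*iq2)) (h*(iq*c0 + k*k)) (h*(-(iq*c0) + - 1 + d2))"
  proof -
    have "t ^ 2 - 1 + s d2 = t ^ 2 + s (- 1) + s d2" by (simp add: sneg s1)
    then show ?thesis by (simp only: TT Lc Lsc h_def)
  qed
  also have "\<dots> = L (h*(iq*iq)) (iq*iq) h (iq*k) (iq*k*iq) C (C * (-(qv^2)) + qv^2 * (k^2 - d2) * h + qv * d2)"
    by (rule Leq) (simp_all only: FID mult_1_right)
  finally show "s (inverse (qint 2)) * (t ^ 2 - 1 + s d2) = s (inverse (qint 2)) * (s (inverse qv) * E * Ki) ^ 2 + s (inverse qv) * (s (inverse qv) * E * Ki) * F + s (inverse (qint 2)) * F ^ 2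
           + s (inverse qv * k) * Ki * F + s (inverse qv * k) * (s (inverse qv) * E * Ki) * Ki
           + s ((qv + (qv ^ 3 - qv) * k ^ 2) / (qv ^ 4 - 1)) * (Ki ^ 2 - s (qv ^ 2))
           + s (qv ^ 2 * (k ^ 2 - d2) / qint 2)
           + s (qv * d2)" unfolding RH2 .
qed

theorem propositionA3:
  fixes c :: "int \<Rightarrow> int"
    and \<phi> :: "Qq \<Rightarrow> 'a::ring_1" and E F K Ki :: 'a
  assumes fin: "finite {i. c i \<noteq> 0}"
    and barinv: "lbar c = c"
    and U: "U_alg \<phi> E F K Ki"
  defines "dia \<equiv> (\<Sum>i\<in>{i. c (2 * i) \<noteq> 0}. (-1) ^ nat \<bar>i\<bar> * c (2 * i))"
    and "Ech \<equiv> \<phi> (inverse qv) * E * Ki"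
    and "t \<equiv> F + \<phi> (inverse qv) * E * Ki + \<phi> (laurent c) * Ki"
  shows "(\<phi> (inverse (qint 2)) * (t ^ 2 - \<phi> (of_int dia ^ 2)) =
           \<phi> (inverse (qint 2)) * Ech ^ 2 + \<phi> (inverse qv) * Ech * F + \<phi> (inverse (qint 2)) * F ^ 2
           + \<phi> (inverse qv * laurent c) * Ki * F + \<phi> (inverse qv * laurent c) * Ech * Ki
           + \<phi> ((qv + (qv ^ 3 - qv) * laurent c ^ 2) / (qv ^ 4 - 1)) * (Ki ^ 2 - 1)
           + \<phi> ((laurent c ^ 2 - of_int dia ^ 2) / qint 2)) \<and>
         (\<phi> (inverse (qint 2)) * (t ^ 2 - 1 + \<phi> (of_int dia ^ 2)) =
           \<phi> (inverse (qint 2)) * Ech ^ 2 + \<phi> (inverse qv) * Ech * F + \<phi> (inverse (qint 2)) * F ^ 2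
           + \<phi> (inverse qv * laurent c) * Ki * F + \<phi> (inverse qv * laurent c) * Ech * Ki
           + \<phi> ((qv + (qv ^ 3 - qv) * laurent c ^ 2) / (qv ^ 4 - 1)) * (Ki ^ 2 - \<phi> (qv ^ 2))
           + \<phi> (qv ^ 2 * (laurent c ^ 2 - of_int dia ^ 2) / qint 2)
           + \<phi> (qv * of_int dia ^ 2))"
proof -
  show ?thesis unfolding t_def Ech_def using main_alg[OF U, of "laurent c" "of_int dia ^ 2"] by blast
qed

end
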